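(* Let $\mathcal G$ be a $\Gamma$-periodic graph with fundamental graph $\mathcal G_*=(\mathcal V_*,\mathcal A_* )=\mathcal G/\Gamma$, where $\Gamma$ has rank $d$, and let $\beta$ be the Betti number of $\mathcal G_*$. Then: (i) there exists a basis $\{\mathbf c_1,\dots,\mathbf c_\beta\}$ of the cycle space $\mathcal C$ of $\mathcal G_*$ such that $\tau(\mathbf c_1),\dots,\tau(\mathbf c_d)$ form the standard orthonormal basis of $\mathbb Z^d$, and $\{\mathbf c_{d+1},\dots,\mathbf c_\beta\}$ is a basis of the subspace $\mathcal C^0$ of all cycles of $\mathcal G_*$ with zero index; (ii) $\{\mathbf c_1,\dots,\mathbf c_\beta\}\cup\{\mathbf e_x\}_{x\in\mathcal V_*}$ is a basis of the cycle space $\widetilde{\mathcal C}$ of the modified fundamental graph $\widetilde{\mathcal G}_*=(\mathcal V_*,\mathcal A_*\cup\{\mathbf e_x\}_{x\in\mathcal V_*})$, where $\mathbf e_x$ is a loop at the vertex $x$.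
   Context: Let $\Gamma\subset\mathbb R^d$ be a lattice with basis $\mathfrak a_1,\dots,\mathfrak a_d$ and fundamental cell $\Omega=\{\sum_sx_s\mathfrak a_s:(x_s)\in[0,1)^d\}$. A $\Gamma$-periodic graph $\mathcal G=(\mathcal V,\mathcal E)$ is a connected, locally finite, infinite graph embedded in $\mathbb R^d$ (loops and multiple edges allowed), invariant under translations by $\Gamma$, whose quotient $\mathcal G_*=(\mathcal V_*,\mathcal E_* )$ is finite; $\beta=\#\mathcal E_*-\#\mathcal V_*+1$. Oriented edges: $\mathcal A_*$. Edge index: write $x=x_0+[x]$ with $x_0\in\mathcal V\cap\Omega$, $[x]\in\Gamma$ with coordinates $[x]_{\mathbb A}\in\mathbb Z^d$; for $(x,y)\in\mathcal A$, $\tau((x,y))=[y]_{\mathbb A}-[x]_{\mathbb A}$, which is $\Gamma$-invariant and thus defined on $\mathcal A_*$, with $\tau$ of the reversed edge equal to $-\tau$. The cycle space $\mathcal C$ of a graph is its integer cycle space (first homology group with $\mathbb Z$ coefficients, a free abelian group of rank equal to the Betti number), generated by closed cycles (sequences of oriented edges forming a closed walk); the index $\tau(\mathbf c)=\sum_{\mathbf e\in\mathbf c}\tau(\mathbf e)$ extends additively to a homomorphism $\mathcal C\to\mathbb Z^d$. In $\widetilde{\mathcal G}_*$ the added loops satisfy $\tau(\mathbf e_x)=0$. *)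

theory Defs
  imports "HOL-Analysis.Analysis"
begin

text \<open>
  Fundamental (quotient) graph G_* : finite vertex set V, finite edge set E
  (multiple edges and loops allowed), each edge e carrying a fixed orientation
  from src e to tgt e; the reversed oriented edge has index - tau e.
  Integer chains are functions E -> int (coefficient of the positively oriented edge).
\<close>

definition chains :: "'e set \<Rightarrow> ('e \<Rightarrow> int) set" where
  "chains E = {c. \<forall>e. e \<notin> E \<longrightarrow> c e = 0}"

definition cycle_space ::
  "'v set \<Rightarrow> 'e set \<Rightarrow> ('e \<Rightarrow> 'v) \<Rightarrow> ('e \<Rightarrow> 'v) \<Rightarrow> ('e \<Rightarrow> int) set" where
  "cycle_space V E src tgt =
     {c \<in> chains E. \<forall>v\<in>V. (\<Sum>e\<in>{e\<in>E. tgt e = v}. c e) = (\<Sum>e\<in>{e\<in>E. src e = v}. c e)}"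

definition chain_index :: "'e set \<Rightarrow> ('e \<Rightarrow> int^'d) \<Rightarrow> ('e \<Rightarrow> int) \<Rightarrow> int^'d" where
  "chain_index E \<tau> c = (\<Sum>e\<in>E. c e *s \<tau> e)"

definition zero_index_cycles ::
  "'v set \<Rightarrow> 'e set \<Rightarrow> ('e \<Rightarrow> 'v) \<Rightarrow> ('e \<Rightarrow> 'v) \<Rightarrow> ('e \<Rightarrow> int^'d) \<Rightarrow> ('e \<Rightarrow> int) set" where
  "zero_index_cycles V E src tgt \<tau> = {c \<in> cycle_space V E src tgt. chain_index E \<tau> c = 0}"

definition Z_basis :: "('e \<Rightarrow> int) set \<Rightarrow> ('i \<Rightarrow> 'e \<Rightarrow> int) \<Rightarrow> 'i set \<Rightarrow> bool" where
  "Z_basis S b I \<longleftrightarrow> finite I \<and> b ` I \<subseteq> S \<and>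
     (\<forall>c\<in>S. \<exists>!a. (\<forall>i. i \<notin> I \<longrightarrow> a i = 0) \<and> c = (\<lambda>e. \<Sum>i\<in>I. a i * b i e))"

text \<open>The Gamma-periodic graph G, written in the coordinates x = x_0 + [x] with
  x_0 \<in> V (vertices in the fundamental cell) and [x]_A \<in> Z^d: its vertex set is
  V \<times> Z^d, and every edge e of G_* from u to v lifts to the edges
  (u,n) -- (v, n + tau e), n \<in> Z^d.\<close>
definition periodic_adj ::
  "'v set \<Rightarrow> 'e set \<Rightarrow> ('e \<Rightarrow> 'v) \<Rightarrow> ('e \<Rightarrow> 'v) \<Rightarrow> ('e \<Rightarrow> int^'d)
   \<Rightarrow> ('v \<times> (int^'d)) \<Rightarrow> ('v \<times> (int^'d)) \<Rightarrow> bool" where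
  "periodic_adj V E src tgt \<tau> x y \<longleftrightarrow> fst x \<in> V \<and> fst y \<in> V \<and>
     (\<exists>e\<in>E. (src e = fst x \<and> tgt e = fst y \<and> snd y = snd x + \<tau> e) \<or>
            (src e = fst y \<and> tgt e = fst x \<and> snd x = snd y + \<tau> e))"

definition periodic_graph_connected ::
  "'v set \<Rightarrow> 'e set \<Rightarrow> ('e \<Rightarrow> 'v) \<Rightarrow> ('e \<Rightarrow> 'v) \<Rightarrow> ('e \<Rightarrow> int^'d) \<Rightarrow> bool" where
  "periodic_graph_connected V E src tgt \<tau> \<longleftrightarrow>
     (\<forall>x y. fst x \<in> V \<longrightarrow> fst y \<in> V \<longrightarrow> (periodic_adj V E src tgt \<tau>)\<^sup>*\<^sup>* x y)"

definition betti :: "'v set \<Rightarrow> 'e set \<Rightarrow> int" where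
  "betti V E = int (card E) - int (card V) + 1"

definition mod_edges :: "'v set \<Rightarrow> 'e set \<Rightarrow> ('e + 'v) set" where
  "mod_edges V E = Inl ` E \<union> Inr ` V"

definition mod_src :: "('e \<Rightarrow> 'v) \<Rightarrow> ('e + 'v) \<Rightarrow> 'v" where
  "mod_src src e' = (case e' of Inl e \<Rightarrow> src e | Inr x \<Rightarrow> x)"

definition mod_tgt :: "('e \<Rightarrow> 'v) \<Rightarrow> ('e + 'v) \<Rightarrow> 'v" where
  "mod_tgt tgt e' = (case e' of Inl e \<Rightarrow> tgt e | Inr x \<Rightarrow> x)"

definition lift_chain :: "('e \<Rightarrow> int) \<Rightarrow> ('e + 'v) \<Rightarrow> int" where
  "lift_chain c e' = (case e' of Inl e \<Rightarrow> c e | Inr _ \<Rightarrow> 0)"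

definition loop_chain :: "'v \<Rightarrow> ('e + 'v) \<Rightarrow> int" where
  "loop_chain x e' = (if e' = Inr x then 1 else 0)"

end

theory Submission
  imports Defs
begin


definition addf :: "(('e \<Rightarrow> int) \<Rightarrow> int) \<Rightarrow> bool" where
  "addf f \<longleftrightarrow> (\<forall>x y. f (\<lambda>e. x e + y e) = f x + f y)"

definition lc :: "('i \<Rightarrow> int) \<Rightarrow> ('i \<Rightarrow> 'e \<Rightarrow> int) \<Rightarrow> 'i set \<Rightarrow> 'e \<Rightarrow> int" where
  "lc a b I = (\<lambda>e. \<Sum>i\<in>I. a i * b i e)"

definition spanZ :: "('i \<Rightarrow> 'e \<Rightarrow> int) \<Rightarrow> 'i set \<Rightarrow> ('e \<Rightarrow> int) set" where
  "spanZ b I = range (\<lambda>a. lc a b I)"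

definition indepZ :: "('i \<Rightarrow> 'e \<Rightarrow> int) \<Rightarrow> 'i set \<Rightarrow> bool" where
  "indepZ b I \<longleftrightarrow> (\<forall>a. lc a b I = (\<lambda>e. 0) \<longrightarrow> (\<forall>i\<in>I. a i = 0))"

definition basisZ :: "('e \<Rightarrow> int) set \<Rightarrow> ('i \<Rightarrow> 'e \<Rightarrow> int) \<Rightarrow> 'i set \<Rightarrow> bool" where
  "basisZ S b I \<longleftrightarrow> finite I \<and> S = spanZ b I \<and> indepZ b I"

lemma addfD: "addf f \<Longrightarrow> f (\<lambda>e. x e + y e) = f x + f y"
  unfolding addf_def by blast

lemma addf_zero: "addf f \<Longrightarrow> f (\<lambda>e. 0) = 0"
proof -
  assume "addf f"
  then have "f (\<lambda>e. (0::int) + 0) = f (\<lambda>e. 0) + f (\<lambda>e. 0)" using addfD[of f "\<lambda>e. 0" "\<lambda>e. 0"] by simp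
  then show ?thesis by simp
qed

lemma addf_neg: "addf f \<Longrightarrow> f (\<lambda>e. - x e) = - f x"
proof -
  assume a: "addf f"
  then have "f (\<lambda>e. x e + - x e) = f x + f (\<lambda>e. - x e)" using addfD[of f x "\<lambda>e. - x e"] by simp
  then show ?thesis using addf_zero[OF a] by simp
qed

lemma addf_nat_mult: "addf f \<Longrightarrow> f (\<lambda>e. int n * x e) = int n * f x"
proof (induction n)
  case 0
  then show ?case using addf_zero by simp
next
  case (Suc n)
  have "f (\<lambda>e. int (Suc n) * x e) = f (\<lambda>e. int n * x e + x e)"
    by (simp add: algebra_simps)
  also have "\<dots> = f (\<lambda>e. int n * x e) + f x" using addfD[OF Suc.prems, of "\<lambda>e. int n * x e" x] by simp
  finally show ?case using Suc by (simp add: algebra_simps)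
qed

lemma addf_mult: "addf f \<Longrightarrow> f (\<lambda>e. k * x e) = k * f x"
proof (cases "k \<ge> 0")
  case True
  assume a: "addf f"
  then show ?thesis using addf_nat_mult[OF a, of "nat k" x] True by simp
next
  case False
  assume a: "addf f"
  have "f (\<lambda>e. k * x e) = f (\<lambda>e. - (int (nat (-k)) * x e))" using False by simp
  also have "\<dots> = - f (\<lambda>e. (int (nat (-k)) * x e))" by (rule addf_neg[OF a])
  also have "\<dots> = k * f x" using addf_nat_mult[OF a, of "nat (-k)" x] False by simp
  finally show ?thesis .
qed

lemma addf_sum: "addf f \<Longrightarrow> f (\<lambda>e. \<Sum>i\<in>I. g i e) = (\<Sum>i\<in>I. f (g i))"
proof (induction I rule: infinite_finite_induct)
  case (infinite A)
  then show ?case using addf_zero by simp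
next
  case empty
  then show ?case using addf_zero by simp
next
  case (insert x F)
  have "f (\<lambda>e. \<Sum>i\<in>insert x F. g i e) = f (\<lambda>e. g x e + (\<Sum>i\<in>F. g i e))"
    using insert by simp
  also have "\<dots> = f (g x) + f (\<lambda>e. \<Sum>i\<in>F. g i e)"
    using addfD[OF insert.prems, of "g x" "\<lambda>e. \<Sum>i\<in>F. g i e"] by simp
  finally show ?case using insert by simp
qed

lemma addf_lc: "addf f \<Longrightarrow> f (lc a b I) = (\<Sum>i\<in>I. a i * f (b i))"
proof -
  assume a: "addf f"
  have "f (lc a b I) = (\<Sum>i\<in>I. f (\<lambda>e. a i * b i e))"
    unfolding lc_def by (rule addf_sum[OF a])
  then show ?thesis using addf_mult[OF a] by simp
qed

lemma lc_diff: "lc (\<lambda>i. a1 i - a2 i) b I = (\<lambda>e. lc a1 b I e - lc a2 b I e)"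
  unfolding lc_def by (simp add: algebra_simps sum_subtractf)

lemma lc_cong: "(\<And>i. i \<in> I \<Longrightarrow> a1 i = a2 i) \<Longrightarrow> lc a1 b I = lc a2 b I"
  unfolding lc_def by auto

lemma lc_delta: "finite I \<Longrightarrow> i \<in> I \<Longrightarrow> lc (\<lambda>j. if j = i then 1 else 0) b I = b i"
proof -
  assume "finite I" "i \<in> I"
  have "\<And>e. (\<Sum>j\<in>I. (if j = i then 1 else 0) * b j e) = (\<Sum>j\<in>I. (if j = i then b j e else 0))"
    by (rule sum.cong) auto
  then show ?thesis unfolding lc_def using \<open>finite I\<close> \<open>i \<in> I\<close> by simp
qed

lemma basisZ_Z_basis:
  assumes "basisZ S b I" shows "Z_basis S b I"
  unfolding Z_basis_def
proof (intro conjI ballI)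
  show "finite I" using assms basisZ_def by blast
  show "b ` I \<subseteq> S"
  proof
    fix x assume "x \<in> b ` I"
    then obtain i where i: "i \<in> I" "x = b i" by blast
    then have "x = lc (\<lambda>j. if j = i then 1 else 0) b I" using lc_delta \<open>finite I\<close> by metis
    then show "x \<in> S" using assms unfolding basisZ_def spanZ_def by blast
  qed
  fix c assume "c \<in> S"
  then obtain a where a: "c = lc a b I" using assms unfolding basisZ_def spanZ_def by blast
  let ?a = "\<lambda>i. if i \<in> I then a i else 0"
  show "\<exists>!a. (\<forall>i. i \<notin> I \<longrightarrow> a i = 0) \<and> c = (\<lambda>e. \<Sum>i\<in>I. a i * b i e)"
  proof (rule ex1I)
    show "(\<forall>i. i \<notin> I \<longrightarrow> ?a i = 0) \<and> c = (\<lambda>e. \<Sum>i\<in>I. ?a i * b i e)"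
      using a unfolding lc_def by simp
  next
    fix a2 assume h: "(\<forall>i. i \<notin> I \<longrightarrow> a2 i = 0) \<and> c = (\<lambda>e. \<Sum>i\<in>I. a2 i * b i e)"
    have "lc (\<lambda>i. a2 i - ?a i) b I = (\<lambda>e. 0)"
    proof -
      have "lc ?a b I = lc a b I" by (rule lc_cong) auto
      then have "lc a2 b I = lc ?a b I" using h a unfolding lc_def by auto
      then show ?thesis unfolding lc_diff by simp
    qed
    then have "\<forall>i\<in>I. a2 i - ?a i = 0" using assms unfolding basisZ_def indepZ_def by blast
    then show "a2 = ?a" using h by auto
  qed
qed


lemma lc_upd: "finite I \<Longrightarrow> i0 \<in> I \<Longrightarrow> lc (a(i0 := v)) b I e = lc a b I e + (v - a i0) * b i0 e"
proof -
  assume f: "finite I" and i0: "i0 \<in> I"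
  have "lc (a(i0 := v)) b I e = v * b i0 e + (\<Sum>i\<in>I - {i0}. a i * b i e)"
    unfolding lc_def using f i0 by (simp add: sum.remove)
  moreover have "lc a b I e = a i0 * b i0 e + (\<Sum>i\<in>I - {i0}. a i * b i e)"
    unfolding lc_def using f i0 by (simp add: sum.remove)
  ultimately show ?thesis by (simp add: algebra_simps)
qed

lemma lc_op: "finite I \<Longrightarrow> i0 \<in> I \<Longrightarrow>
   lc a (\<lambda>i e. b i e + c i * b i0 e) I = lc (a(i0 := a i0 + (\<Sum>i\<in>I. a i * c i))) b I"
proof
  fix e assume f: "finite I" and i0: "i0 \<in> I"
  have "lc a (\<lambda>i e. b i e + c i * b i0 e) I e = lc a b I e + (\<Sum>i\<in>I. a i * c i) * b i0 e"
    unfolding lc_def by (simp add: algebra_simps sum.distrib sum_distrib_right sum_distrib_left)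
  then show "lc a (\<lambda>i e. b i e + c i * b i0 e) I e = lc (a(i0 := a i0 + (\<Sum>i\<in>I. a i * c i))) b I e"
    using lc_upd[OF f i0, of a "a i0 + (\<Sum>i\<in>I. a i * c i)" b e] by simp
qed

lemma span_op_sub: "finite I \<Longrightarrow> i0 \<in> I \<Longrightarrow>
   spanZ (\<lambda>i e. b i e + c i * b i0 e) I \<subseteq> spanZ b I"
proof
  fix x assume f: "finite I" and i0: "i0 \<in> I" and "x \<in> spanZ (\<lambda>i e. b i e + c i * b i0 e) I"
  then obtain a where "x = lc a (\<lambda>i e. b i e + c i * b i0 e) I" unfolding spanZ_def by blast
  then have "x = lc (a(i0 := a i0 + (\<Sum>i\<in>I. a i * c i))) b I" using lc_op[OF f i0] by simp
  then show "x \<in> spanZ b I" unfolding spanZ_def by blast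
qed

lemma span_op: "finite I \<Longrightarrow> i0 \<in> I \<Longrightarrow> c i0 = 0 \<Longrightarrow>
   spanZ (\<lambda>i e. b i e + c i * b i0 e) I = spanZ b I"
proof
  assume f: "finite I" and i0: "i0 \<in> I" and c0: "c i0 = 0"
  show "spanZ (\<lambda>i e. b i e + c i * b i0 e) I \<subseteq> spanZ b I" using span_op_sub[OF f i0] .
  let ?b = "\<lambda>i e. b i e + c i * b i0 e"
  have "b = (\<lambda>i e. ?b i e + (- c i) * ?b i0 e)" using c0 by (auto simp: algebra_simps)
  then show "spanZ b I \<subseteq> spanZ ?b I" using span_op_sub[OF f i0, of ?b "\<lambda>i. - c i"] by simp
qed

lemma indep_op: "finite I \<Longrightarrow> i0 \<in> I \<Longrightarrow> c i0 = 0 \<Longrightarrow> indepZ b I \<Longrightarrow>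
   indepZ (\<lambda>i e. b i e + c i * b i0 e) I"
  unfolding indepZ_def
proof (intro allI impI)
  fix a
  assume f: "finite I" and i0: "i0 \<in> I" and c0: "c i0 = 0" and ind: "\<forall>a. lc a b I = (\<lambda>e. 0) \<longrightarrow> (\<forall>i\<in>I. a i = 0)"
    and z: "lc a (\<lambda>i e. b i e + c i * b i0 e) I = (\<lambda>e. 0)"
  let ?a = "a(i0 := a i0 + (\<Sum>i\<in>I. a i * c i))"
  have "lc ?a b I = (\<lambda>e. 0)" using z lc_op[OF f i0, of a b c] by simp
  then have "\<forall>i\<in>I. ?a i = 0" using ind by blast
  then have a1: "\<forall>i\<in>I - {i0}. a i = 0" by (metis DiffE fun_upd_other singletonI)
  have "(\<Sum>i\<in>I. a i * c i) = 0" by (rule sum.neutral) (use a1 c0 in auto)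
  then have "a i0 = 0" using \<open>\<forall>i\<in>I. ?a i = 0\<close> i0 by auto
  then show "\<forall>i\<in>I. a i = 0" using a1 by auto
qed

lemma basisZ_op: "basisZ S b I \<Longrightarrow> i0 \<in> I \<Longrightarrow> c i0 = 0 \<Longrightarrow>
   basisZ S (\<lambda>i e. b i e + c i * b i0 e) I"
  unfolding basisZ_def using span_op[of I i0 c b] indep_op[of I i0 c b] by simp

lemma lc_neg: "finite I \<Longrightarrow> i0 \<in> I \<Longrightarrow>
   lc a (b(i0 := (\<lambda>e. - b i0 e))) I = lc (a(i0 := - a i0)) b I"
proof
  fix e assume f: "finite I" and i0: "i0 \<in> I"
  have "lc a (b(i0 := (\<lambda>e. - b i0 e))) I e = - a i0 * b i0 e + (\<Sum>i\<in>I - {i0}. a i * b i e)"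
    unfolding lc_def using f i0 by (simp add: sum.remove)
  moreover have "lc (a(i0 := - a i0)) b I e = - a i0 * b i0 e + (\<Sum>i\<in>I - {i0}. a i * b i e)"
    unfolding lc_def using f i0 by (simp add: sum.remove)
  ultimately show "lc a (b(i0 := (\<lambda>e. - b i0 e))) I e = lc (a(i0 := - a i0)) b I e" by simp
qed

lemma span_neg: "finite I \<Longrightarrow> i0 \<in> I \<Longrightarrow> spanZ (b(i0 := (\<lambda>e. - b i0 e))) I = spanZ b I"
proof
  assume f: "finite I" and i0: "i0 \<in> I"
  show "spanZ (b(i0 := (\<lambda>e. - b i0 e))) I \<subseteq> spanZ b I"
    unfolding spanZ_def using lc_neg[OF f i0] by fastforce
  show "spanZ b I \<subseteq> spanZ (b(i0 := (\<lambda>e. - b i0 e))) I"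
  proof
    fix x assume "x \<in> spanZ b I"
    then obtain a where "x = lc a b I" unfolding spanZ_def by blast
    then have "x = lc (a(i0 := - a i0)) (b(i0 := (\<lambda>e. - b i0 e))) I"
      using lc_neg[OF f i0, of "a(i0 := - a i0)" b] by simp
    then show "x \<in> spanZ (b(i0 := (\<lambda>e. - b i0 e))) I" unfolding spanZ_def by blast
  qed
qed

lemma basisZ_neg: "basisZ S b I \<Longrightarrow> i0 \<in> I \<Longrightarrow> basisZ S (b(i0 := (\<lambda>e. - b i0 e))) I"
  unfolding basisZ_def
proof (elim conjE, intro conjI)
  assume f: "finite I" and i0: "i0 \<in> I" and S: "S = spanZ b I" and ind: "indepZ b I"
  show "finite I" by fact
  show "S = spanZ (b(i0 := (\<lambda>e. - b i0 e))) I" using S span_neg[OF f i0, of b] by simp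
  show "indepZ (b(i0 := (\<lambda>e. - b i0 e))) I"
    unfolding indepZ_def
  proof (intro allI impI)
    fix a assume "lc a (b(i0 := (\<lambda>e. - b i0 e))) I = (\<lambda>e. 0)"
    then have "lc (a(i0 := - a i0)) b I = (\<lambda>e. 0)" using lc_neg[OF f i0, of a b] by simp
    then have "\<forall>i\<in>I. (a(i0 := - a i0)) i = 0" using ind unfolding indepZ_def by blast
    then show "\<forall>i\<in>I. a i = 0" by (metis fun_upd_apply neg_equal_0_iff_equal)
  qed
qed

lemma basisZ_reindex:
  assumes bij: "bij_betw h I' I" and B: "basisZ S b I"
  shows "basisZ S (\<lambda>i. b (h i)) I'"
proof -
  have f: "finite I" using B basisZ_def by blast
  have f': "finite I'" using bij f bij_betw_finite by blast
  let ?g = "inv_into I' h"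
  have bg: "bij_betw ?g I I'" using bij bij_betw_inv_into by blast
  have gh: "\<And>i. i \<in> I' \<Longrightarrow> ?g (h i) = i" using bij bij_betw_inv_into_left by metis
  have hg: "\<And>i. i \<in> I \<Longrightarrow> h (?g i) = i" using bij bij_betw_inv_into_right by metis
  have L1: "lc a (\<lambda>i. b (h i)) I' = lc (\<lambda>i. a (?g i)) b I" for a
  proof
    fix e
    have "(\<Sum>i\<in>I'. a i * b (h i) e) = (\<Sum>i\<in>I. a (?g i) * b (h (?g i)) e)"
      using sum.reindex_bij_betw[OF bg, of "\<lambda>i. a i * b (h i) e"] by simp
    also have "\<dots> = (\<Sum>i\<in>I. a (?g i) * b i e)" using hg by simp
    finally show "lc a (\<lambda>i. b (h i)) I' e = lc (\<lambda>i. a (?g i)) b I e" unfolding lc_def by simp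
  qed
  have L2: "lc a b I = lc (\<lambda>i. a (h i)) (\<lambda>i. b (h i)) I'" for a
  proof -
    have "lc (\<lambda>i. a (h i)) (\<lambda>i. b (h i)) I' = lc (\<lambda>i. a (h (?g i))) b I" by (rule L1)
    also have "\<dots> = lc a b I" by (rule lc_cong) (simp add: hg)
    finally show ?thesis by simp
  qed
  have "spanZ (\<lambda>i. b (h i)) I' \<subseteq> spanZ b I"
    unfolding spanZ_def using L1 by auto
  moreover have "spanZ b I \<subseteq> spanZ (\<lambda>i. b (h i)) I'"
    unfolding spanZ_def using L2 by auto
  ultimately have "S = spanZ (\<lambda>i. b (h i)) I'" using B unfolding basisZ_def by blast
  moreover have "indepZ (\<lambda>i. b (h i)) I'"
    unfolding indepZ_def
  proof (intro allI impI ballI)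
    fix a i assume z: "lc a (\<lambda>i. b (h i)) I' = (\<lambda>e. 0)" and i: "i \<in> I'"
    have "lc (\<lambda>i. a (?g i)) b I = (\<lambda>e. 0)" using z L1[of a] by simp
    then have "\<forall>k\<in>I. a (?g k) = 0" using B unfolding basisZ_def indepZ_def by blast
    moreover have "h i \<in> I" using bij i bij_betw_apply by metis
    ultimately show "a i = 0" using gh[OF i] by metis
  qed
  ultimately show ?thesis using f' unfolding basisZ_def by blast
qed


lemma lc_restrict: "finite I \<Longrightarrow> K \<subseteq> I \<Longrightarrow> lc (\<lambda>i. if i \<in> K then a i else 0) b I = lc a b K"
proof
  fix e assume f: "finite I" and K: "K \<subseteq> I"
  have "(\<Sum>i\<in>I. (if i \<in> K then a i else 0) * b i e) = (\<Sum>i\<in>I. if i \<in> K then a i * b i e else 0)"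
    by (rule sum.cong) auto
  also have "\<dots> = (\<Sum>i\<in>I \<inter> K. a i * b i e)" using f by (simp add: sum.inter_restrict)
  also have "I \<inter> K = K" using K by blast
  finally show "lc (\<lambda>i. if i \<in> K then a i else 0) b I e = lc a b K e" unfolding lc_def by simp
qed

lemma in_spanZ: "lc a b I \<in> spanZ b I" unfolding spanZ_def by blast

lemma basis_elem_in: "basisZ S b I \<Longrightarrow> i \<in> I \<Longrightarrow> b i \<in> S"
  unfolding basisZ_def using lc_delta[of I i b] in_spanZ by metis

lemma L_lc_delta:
  assumes f: "finite I" and add: "addf (L j')" and inj: "inj_on \<phi> J" and sub: "\<phi> ` J \<subseteq> I"
    and j': "j' \<in> J"
    and d: "\<forall>j\<in>J. L j' (b (\<phi> j)) = (if j' = j then 1 else 0)"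
    and z: "\<forall>i\<in>I - \<phi> ` J. L j' (b i) = 0"
  shows "L j' (lc a b I) = a (\<phi> j')"
proof -
  have "L j' (lc a b I) = (\<Sum>i\<in>I. a i * L j' (b i))" by (rule addf_lc[OF add])
  also have "\<dots> = (\<Sum>i\<in>I. if i = \<phi> j' then a i else 0)"
  proof (rule sum.cong)
    fix i assume i: "i \<in> I"
    show "a i * L j' (b i) = (if i = \<phi> j' then a i else 0)"
    proof (cases "i \<in> \<phi> ` J")
      case True
      then obtain j where j: "j \<in> J" "i = \<phi> j" by blast
      have "(i = \<phi> j') = (j' = j)" using inj j j' unfolding inj_on_def by metis
      then show ?thesis using d j by auto
    next
      case False
      then have "i \<noteq> \<phi> j'" using j' by blast
      then show ?thesis using False z i by auto
    qed
  qed simp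
  also have "\<dots> = a (\<phi> j')" using f sub j' by (simp add: sum.delta image_subset_iff)
  finally show ?thesis .
qed

lemma basisZ_kernel:
  assumes B: "basisZ S b I" and fJ: "finite J" and add: "\<forall>j\<in>J. addf (L j)"
    and inj: "inj_on \<phi> J" and sub: "\<phi> ` J \<subseteq> I"
    and d: "\<forall>j\<in>J. \<forall>j'\<in>J. L j' (b (\<phi> j)) = (if j' = j then 1 else 0)"
    and z: "\<forall>i\<in>I - \<phi> ` J. \<forall>j'\<in>J. L j' (b i) = 0"
  shows "basisZ {x\<in>S. \<forall>j\<in>J. L j x = 0} b (I - \<phi> ` J)"
proof -
  have f: "finite I" using B basisZ_def by blast
  have Lv: "\<And>a j'. j' \<in> J \<Longrightarrow> L j' (lc a b I) = a (\<phi> j')"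
    using L_lc_delta[OF f _ inj sub] add d z by blast
  have K: "I - \<phi> ` J \<subseteq> I" by blast
  have S: "S = spanZ b I" using B basisZ_def by blast
  have "{x\<in>S. \<forall>j\<in>J. L j x = 0} = spanZ b (I - \<phi> ` J)"
  proof
    show "{x\<in>S. \<forall>j\<in>J. L j x = 0} \<subseteq> spanZ b (I - \<phi> ` J)"
    proof
      fix x assume x: "x \<in> {x\<in>S. \<forall>j\<in>J. L j x = 0}"
      then obtain a where a: "x = lc a b I" using S unfolding spanZ_def by blast
      have a0: "\<forall>j\<in>J. a (\<phi> j) = 0" using x a Lv by auto
      have "x = lc (\<lambda>i. if i \<in> I - \<phi> ` J then a i else 0) b I"
        unfolding a by (rule lc_cong) (use a0 in auto)
      then have "x = lc a b (I - \<phi> ` J)" using lc_restrict[OF f K] by simp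
      then show "x \<in> spanZ b (I - \<phi> ` J)" using in_spanZ by metis
    qed
  next
    show "spanZ b (I - \<phi> ` J) \<subseteq> {x\<in>S. \<forall>j\<in>J. L j x = 0}"
    proof
      fix x assume "x \<in> spanZ b (I - \<phi> ` J)"
      then obtain a where "x = lc a b (I - \<phi> ` J)" unfolding spanZ_def by blast
      then have x: "x = lc (\<lambda>i. if i \<in> I - \<phi> ` J then a i else 0) b I" using lc_restrict[OF f K, of a b] by simp
      then have "x \<in> S" using S in_spanZ by metis
      moreover have "\<forall>j\<in>J. L j x = 0" using x Lv by simp
      ultimately show "x \<in> {x\<in>S. \<forall>j\<in>J. L j x = 0}" by blast
    qed
  qed
  moreover have "indepZ b (I - \<phi> ` J)"
    unfolding indepZ_def
  proof (intro allI impI ballI)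
    fix a i assume z0: "lc a b (I - \<phi> ` J) = (\<lambda>e. 0)" and i: "i \<in> I - \<phi> ` J"
    have "lc (\<lambda>i. if i \<in> I - \<phi> ` J then a i else 0) b I = (\<lambda>e. 0)" using z0 lc_restrict[OF f K, of a b] by simp
    then have "\<forall>k\<in>I. (if k \<in> I - \<phi> ` J then a k else 0) = 0" using B unfolding basisZ_def indepZ_def by blast
    then show "a i = 0" using i by auto
  qed
  moreover have "finite (I - \<phi> ` J)" using f by blast
  ultimately show ?thesis unfolding basisZ_def by blast
qed



lemma abs_reduce:
  fixes p q :: int
  assumes "q \<noteq> 0" "\<bar>q\<bar> \<le> \<bar>p\<bar>"
  shows "\<bar>p - sgn p * sgn q * q\<bar> = \<bar>p\<bar> - \<bar>q\<bar>"
  using assms by (cases "p > 0"; cases "q > 0") (auto simp: sgn_if)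

lemma euclid:
  assumes B: "basisZ S b I" and R: "R \<subseteq> I" and add: "addf lf"
    and x: "x \<in> spanZ b R" and lx: "lf x = 1"
  shows "\<exists>b' i0. basisZ S b' I \<and> (\<forall>i\<in>I - R. b' i = b i) \<and> i0 \<in> R \<and> lf (b' i0) = 1
     \<and> (\<forall>i\<in>R - {i0}. lf (b' i) = 0) \<and> spanZ b' R = spanZ b R"
  using B x
proof (induction "\<Sum>i\<in>R. nat \<bar>lf (b i)\<bar>" arbitrary: b rule: less_induct)
  case less
  have fI: "finite I" using less.prems basisZ_def by blast
  have fR: "finite R" using fI R finite_subset by blast
  show ?case
  proof (cases "\<exists>i\<in>R. \<exists>j\<in>R. i \<noteq> j \<and> lf (b i) \<noteq> 0 \<and> lf (b j) \<noteq> 0")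
    case True
    then obtain i j where ij: "i \<in> R" "j \<in> R" "i \<noteq> j" "lf (b i) \<noteq> 0" "lf (b j) \<noteq> 0"
      "\<bar>lf (b j)\<bar> \<le> \<bar>lf (b i)\<bar>"
      by (metis linear)
    define s where "s = sgn (lf (b i)) * sgn (lf (b j))"
    define c where "c = (\<lambda>k. if k = i then - s else 0)"
    define b1 where "b1 = (\<lambda>k e. b k e + c k * b j e)"
    have cj: "c j = 0" using ij unfolding c_def by simp
    have B1: "basisZ S b1 I" unfolding b1_def using basisZ_op[of S b I j c] less.prems(1) cj ij R by blast
    have sp1: "spanZ b1 R = spanZ b R" unfolding b1_def using span_op[of R j c b] fR ij(2) cj by blast
    have lb1: "lf (b1 k) = lf (b k) + c k * lf (b j)" for k
      unfolding b1_def using addfD[OF add] addf_mult[OF add] by simp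
    have lt: "(\<Sum>k\<in>R. nat \<bar>lf (b1 k)\<bar>) < (\<Sum>k\<in>R. nat \<bar>lf (b k)\<bar>)"
    proof (rule sum_strict_mono_ex1[OF fR])
      show "\<forall>k\<in>R. nat \<bar>lf (b1 k)\<bar> \<le> nat \<bar>lf (b k)\<bar>"
      proof
        fix k assume "k \<in> R"
        show "nat \<bar>lf (b1 k)\<bar> \<le> nat \<bar>lf (b k)\<bar>"
        proof (cases "k = i")
          case True
          then have "lf (b1 k) = lf (b i) - s * lf (b j)" using lb1 c_def by simp
          then have "\<bar>lf (b1 k)\<bar> = \<bar>lf (b i)\<bar> - \<bar>lf (b j)\<bar>"
            using abs_reduce[OF ij(5) ij(6)] unfolding s_def by simp
          then show ?thesis using True by simp
        next
          case False
          then show ?thesis using lb1 c_def by simp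
        qed
      qed
      have "lf (b1 i) = lf (b i) - s * lf (b j)" using lb1 c_def by simp
      then have "\<bar>lf (b1 i)\<bar> = \<bar>lf (b i)\<bar> - \<bar>lf (b j)\<bar>"
        using abs_reduce[OF ij(5) ij(6)] unfolding s_def by simp
      then have "nat \<bar>lf (b1 i)\<bar> < nat \<bar>lf (b i)\<bar>" using ij(5) ij(6) by simp
      then show "\<exists>k\<in>R. nat \<bar>lf (b1 k)\<bar> < nat \<bar>lf (b k)\<bar>" using ij(1) by blast
    qed
    have x1: "x \<in> spanZ b1 R" using sp1 less.prems(2) by simp
    obtain b' i0 where H: "basisZ S b' I" "\<forall>i\<in>I - R. b' i = b1 i" "i0 \<in> R" "lf (b' i0) = 1"
      "\<forall>i\<in>R - {i0}. lf (b' i) = 0" "spanZ b' R = spanZ b1 R"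
      using less.hyps[OF lt B1 x1] by blast
    have "\<forall>i\<in>I - R. b' i = b i" using H(2) unfolding b1_def c_def using ij by auto
    then show ?thesis using H sp1 by metis
  next
    case False
    obtain a where a: "x = lc a b R" using less.prems(2) unfolding spanZ_def by blast
    have sum1: "(\<Sum>k\<in>R. a k * lf (b k)) = 1" using addf_lc[OF add, of a b R] a lx by simp
    obtain i0 where i0: "i0 \<in> R" "lf (b i0) \<noteq> 0"
    proof -
      have "\<not> (\<forall>k\<in>R. lf (b k) = 0)"
      proof
        assume "\<forall>k\<in>R. lf (b k) = 0"
        then have "(\<Sum>k\<in>R. a k * lf (b k)) = 0" by simp
        then show False using sum1 by simp
      qed
      then show ?thesis using that by blast
    qed
    have oth: "\<forall>k\<in>R - {i0}. lf (b k) = 0" using False i0 by blast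
    have "(\<Sum>k\<in>R. a k * lf (b k)) = a i0 * lf (b i0) + (\<Sum>k\<in>R - {i0}. a k * lf (b k))"
      using fR i0 by (simp add: sum.remove)
    also have "(\<Sum>k\<in>R - {i0}. a k * lf (b k)) = 0" using oth by simp
    finally have "a i0 * lf (b i0) = 1" using sum1 by simp
    then have pm: "lf (b i0) = 1 \<or> lf (b i0) = -1" using zmult_eq_1_iff by blast
    show ?thesis
    proof (cases "lf (b i0) = 1")
      case True
      then show ?thesis using less.prems(1) i0 oth by blast
    next
      case False
      then have m: "lf (b i0) = -1" using pm by blast
      let ?b = "b(i0 := (\<lambda>e. - b i0 e))"
      have "basisZ S ?b I" using basisZ_neg[OF less.prems(1)] i0 R by blast
      moreover have "\<forall>i\<in>I - R. ?b i = b i" using i0 by auto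
      moreover have "lf (?b i0) = 1" using addf_neg[OF add, of "b i0"] m by simp
      moreover have "\<forall>i\<in>R - {i0}. lf (?b i) = 0" using oth by simp
      moreover have "spanZ ?b R = spanZ b R" using span_neg[OF fR i0(1)] .
      ultimately show ?thesis using i0 by blast
    qed
  qed
qed



lemma addf_const0: "addf (\<lambda>x. 0)" unfolding addf_def by simp

lemma addf_if: "addf f \<Longrightarrow> addf (\<lambda>x. if P then f x else 0)"
  unfolding addf_def by auto

lemma addf_vanish_span:
  assumes "addf f" "\<forall>i\<in>R. f (b i) = 0" "y \<in> spanZ b R"
  shows "f y = 0"
proof -
  obtain a where "y = lc a b R" using assms(3) unfolding spanZ_def by blast
  then show ?thesis using addf_lc[OF assms(1), of a b R] assms(2) by simp
qed

lemma CL: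
  assumes fJ: "finite J" and B: "basisZ S b I" and add: "\<forall>j. addf (L j)"
    and supp: "\<forall>x\<in>S. \<forall>j. j \<notin> J \<longrightarrow> L j x = 0"
    and surj: "\<forall>j\<in>J. \<exists>x\<in>S. \<forall>j'. L j' x = (if j' = j then 1 else 0)"
  shows "\<exists>b' \<phi>. basisZ S b' I \<and> inj_on \<phi> J \<and> \<phi> ` J \<subseteq> I
     \<and> (\<forall>j\<in>J. \<forall>j'. L j' (b' (\<phi> j)) = (if j' = j then 1 else 0))
     \<and> (\<forall>i\<in>I - \<phi> ` J. \<forall>j'. L j' (b' i) = 0)"
  using fJ add supp surj
proof (induction J arbitrary: L rule: finite_induct)
  case empty
  have "\<forall>i\<in>I. \<forall>j'. L j' (b i) = 0" using empty.prems(2) basis_elem_in[OF B] by blast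
  then show ?case using B by auto
next
  case (insert j0 J0 L)
  have fI: "finite I" using B basisZ_def by blast
  define L' where "L' = (\<lambda>j x. if j \<in> J0 then L j x else 0)"
  have add': "\<forall>j. addf (L' j)" unfolding L'_def using insert.prems(1) addf_if by blast
  have supp': "\<forall>x\<in>S. \<forall>j. j \<notin> J0 \<longrightarrow> L' j x = 0" unfolding L'_def by simp
  have surj': "\<forall>j\<in>J0. \<exists>x\<in>S. \<forall>j'. L' j' x = (if j' = j then 1 else 0)"
  proof
    fix j assume j: "j \<in> J0"
    then obtain x where x: "x \<in> S" "\<forall>j'. L j' x = (if j' = j then 1 else 0)" using insert.prems(3) by blast
    have "\<forall>j'. L' j' x = (if j' = j then 1 else 0)" unfolding L'_def using j x(2) by auto
    then show "\<exists>x\<in>S. \<forall>j'. L' j' x = (if j' = j then 1 else 0)" using x(1) by blast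
  qed
  obtain b1 \<phi>0 where H: "basisZ S b1 I" "inj_on \<phi>0 J0" "\<phi>0 ` J0 \<subseteq> I"
     "\<forall>j\<in>J0. \<forall>j'. L' j' (b1 (\<phi>0 j)) = (if j' = j then 1 else 0)"
     "\<forall>i\<in>I - \<phi>0 ` J0. \<forall>j'. L' j' (b1 i) = 0"
    using insert.IH[OF add' supp' surj'] by blast
  define R where "R = I - \<phi>0 ` J0"
  have RI: "R \<subseteq> I" unfolding R_def by blast
  have S1: "S = spanZ b1 I" using H(1) basisZ_def by blast
  obtain x where x: "x \<in> S" "\<forall>j'. L j' x = (if j' = j0 then 1 else 0)" using insert.prems(3) by blast
  obtain a where a: "x = lc a b1 I" using x S1 unfolding spanZ_def by blast
  have a0: "\<forall>j\<in>J0. a (\<phi>0 j) = 0"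
  proof
    fix j assume j: "j \<in> J0"
    have "L' j (lc a b1 I) = a (\<phi>0 j)"
      by (rule L_lc_delta[OF fI _ H(2) H(3) j]) (use add' H(4) H(5) in auto)
    moreover have "L' j x = 0" unfolding L'_def using x(2) j insert.hyps(2) by auto
    ultimately show "a (\<phi>0 j) = 0" using a by simp
  qed
  have "x = lc (\<lambda>i. if i \<in> R then a i else 0) b1 I"
    unfolding a by (rule lc_cong) (use a0 in \<open>auto simp: R_def\<close>)
  then have "x = lc a b1 R" using lc_restrict[OF fI RI, of a b1] by simp
  then have xR: "x \<in> spanZ b1 R" using in_spanZ by metis
  have addj0: "addf (L j0)" using insert.prems(1) by blast
  obtain b2 i0 where E: "basisZ S b2 I" "\<forall>i\<in>I - R. b2 i = b1 i" "i0 \<in> R" "L j0 (b2 i0) = 1"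
     "\<forall>i\<in>R - {i0}. L j0 (b2 i) = 0" "spanZ b2 R = spanZ b1 R"
    using euclid[OF H(1) RI addj0 xR] x(2) by auto
  have b2R: "\<forall>i\<in>R. \<forall>j\<in>J0. L j (b2 i) = 0"
  proof (intro ballI)
    fix i j assume i: "i \<in> R" and j: "j \<in> J0"
    have fR: "finite R" using fI RI finite_subset by blast
    have "b2 i = lc (\<lambda>j. if j = i then 1 else 0) b2 R" using lc_delta[OF fR i, of b2] by simp
    then have "b2 i \<in> spanZ b2 R" using in_spanZ by metis
    then have "b2 i \<in> spanZ b1 R" using E(6) by simp
    moreover have "\<forall>k\<in>R. L' j (b1 k) = 0" using H(5) R_def by blast
    ultimately have "L' j (b2 i) = 0" using addf_vanish_span add' by blast
    then show "L j (b2 i) = 0" using j unfolding L'_def by simp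
  qed
  have b2S: "\<And>i. i \<in> I \<Longrightarrow> b2 i \<in> S" using basis_elem_in[OF E(1)] .
  have supL: "\<And>i j. i \<in> I \<Longrightarrow> j \<notin> insert j0 J0 \<Longrightarrow> L j (b2 i) = 0" using b2S insert.prems(2) by blast
  define c where "c = (\<lambda>i. if i \<in> \<phi>0 ` J0 then - L j0 (b2 i) else 0)"
  define b3 where "b3 = (\<lambda>i e. b2 i e + c i * b2 i0 e)"
  have ci0: "c i0 = 0" using E(3) unfolding c_def R_def by auto
  have i0I: "i0 \<in> I" using E(3) RI by blast
  have B3: "basisZ S b3 I" unfolding b3_def using basisZ_op[of S b2 I i0 c] E(1) i0I ci0 by blast
  have Lb3: "L j (b3 i) = L j (b2 i) + c i * L j (b2 i0)" for i j
    unfolding b3_def using addfD[of "L j"] addf_mult[of "L j"] insert.prems(1) by simp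
  have Li0: "L j (b2 i0) = (if j = j0 then 1 else 0)" for j
    using E(4) b2R E(3) supL[OF i0I] by (cases "j = j0"; cases "j \<in> J0") auto
  define \<phi> where "\<phi> = \<phi>0(j0 := i0)"
  have inj: "inj_on \<phi> (insert j0 J0)"
  proof -
    have "inj_on \<phi> J0" using H(2) insert.hyps(2) unfolding \<phi>_def inj_on_def by auto
    moreover have "\<phi> j0 \<notin> \<phi> ` J0" using E(3) insert.hyps(2) unfolding \<phi>_def R_def by auto
    ultimately show ?thesis using insert.hyps(2) by simp
  qed
  have imgs: "\<phi> ` insert j0 J0 \<subseteq> I" using H(3) i0I insert.hyps(2) unfolding \<phi>_def by auto
  have vals: "\<forall>j\<in>insert j0 J0. \<forall>j'. L j' (b3 (\<phi> j)) = (if j' = j then 1 else 0)"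
  proof (intro ballI allI)
    fix j j' assume j: "j \<in> insert j0 J0"
    show "L j' (b3 (\<phi> j)) = (if j' = j then 1 else 0)"
    proof (cases "j = j0")
      case True
      then show ?thesis using Lb3 ci0 Li0 unfolding \<phi>_def by simp
    next
      case False
      then have jJ0: "j \<in> J0" using j by blast
      have pj: "\<phi> j = \<phi>0 j" using False unfolding \<phi>_def by simp
      have pjI: "\<phi>0 j \<in> I" using H(3) jJ0 by blast
      have b2e: "b2 (\<phi>0 j) = b1 (\<phi>0 j)" proof -
        have "\<phi>0 j \<in> I - R" using pjI jJ0 unfolding R_def by blast
        then show ?thesis using E(2) by blast
      qed
      have cj: "c (\<phi>0 j) = - L j0 (b2 (\<phi>0 j))" unfolding c_def using jJ0 by simp
      have "L j' (b3 (\<phi> j)) = L j' (b2 (\<phi>0 j)) - L j0 (b2 (\<phi>0 j)) * L j' (b2 i0)"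
        using Lb3 pj cj by simp
      moreover have "j' \<in> J0 \<Longrightarrow> L j' (b2 (\<phi>0 j)) = (if j' = j then 1 else 0)"
        using H(4) jJ0 b2e unfolding L'_def by metis
      ultimately show ?thesis using Li0 supL[OF pjI] insert.hyps(2) jJ0
        by (cases "j' = j0"; cases "j' \<in> J0") auto
    qed
  qed
  have zer: "\<forall>i\<in>I - \<phi> ` insert j0 J0. \<forall>j'. L j' (b3 i) = 0"
  proof (intro ballI allI)
    fix i j' assume i: "i \<in> I - \<phi> ` insert j0 J0"
    have iR: "i \<in> R - {i0}" using i insert.hyps(2) unfolding R_def \<phi>_def by auto
    have ci: "c i = 0" using iR unfolding c_def R_def by auto
    have iI: "i \<in> I" using i by blast
    show "L j' (b3 i) = 0" using Lb3 ci E(5) iR b2R supL[OF iI]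
      by (cases "j' = j0"; cases "j' \<in> J0") auto
  qed
  show ?case using B3 inj imgs vals zer by blast
qed



definition dl :: "'e \<Rightarrow> 'e \<Rightarrow> int" where "dl e = (\<lambda>e'. if e' = e then 1 else 0)"

definition bd :: "'e set \<Rightarrow> ('e \<Rightarrow> 'v) \<Rightarrow> ('e \<Rightarrow> 'v) \<Rightarrow> ('e \<Rightarrow> int) \<Rightarrow> 'v \<Rightarrow> int" where
  "bd E src tgt x v = (\<Sum>e\<in>{e\<in>E. tgt e = v}. x e) - (\<Sum>e\<in>{e\<in>E. src e = v}. x e)"

lemma chains_basis: "finite E \<Longrightarrow> basisZ (chains E) dl E"
  unfolding basisZ_def
proof (intro conjI)
  assume f: "finite E"
  have lcd: "lc a dl E e' = (if e' \<in> E then a e' else 0)" for a e'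
  proof -
    have "lc a dl E e' = (\<Sum>e\<in>E. if e = e' then a e else 0)"
      unfolding lc_def dl_def by (rule sum.cong) auto
    then show ?thesis using f by (simp add: sum.delta)
  qed
  show "finite E" by fact
  show "chains E = spanZ dl E"
  proof
    show "chains E \<subseteq> spanZ dl E"
    proof
      fix x assume "x \<in> chains E"
      then have "x = lc x dl E" using lcd unfolding chains_def by auto
      then show "x \<in> spanZ dl E" using in_spanZ by metis
    qed
    show "spanZ dl E \<subseteq> chains E" unfolding spanZ_def chains_def using lcd by auto
  qed
  show "indepZ dl E" unfolding indepZ_def
  proof (intro allI impI ballI)
    fix a i assume "lc a dl E = (\<lambda>e. 0)" "i \<in> E"
    then show "a i = 0" using lcd[of a i] by (metis)
  qed
qed

lemma addf_bd: "addf (\<lambda>x. bd E src tgt x v)"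
  unfolding addf_def bd_def by (simp add: sum.distrib)

lemma ci_component: "chain_index E \<tau> x $ i = (\<Sum>e\<in>E. x e * \<tau> e $ i)"
  unfolding chain_index_def by (simp add: sum_component)

lemma addf_ci: "addf (\<lambda>x. chain_index E \<tau> x $ i)"
  unfolding addf_def ci_component by (simp add: algebra_simps sum.distrib)

lemma ci_add: "chain_index E \<tau> (\<lambda>e. x e + y e) = chain_index E \<tau> x + chain_index E \<tau> y"
  by (simp add: vec_eq_iff ci_component algebra_simps sum.distrib)

lemma ci_neg: "chain_index E \<tau> (\<lambda>e. - x e) = - chain_index E \<tau> x"
  by (simp add: vec_eq_iff ci_component sum_negf)

lemma ci_zero: "chain_index E \<tau> (\<lambda>e. 0) = 0"
  by (simp add: vec_eq_iff ci_component)

lemma ci_dl: "finite E \<Longrightarrow> e \<in> E \<Longrightarrow> chain_index E \<tau> (dl e) = \<tau> e"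
proof -
  assume f: "finite E" and e: "e \<in> E"
  have "chain_index E \<tau> (dl e) $ i = \<tau> e $ i" for i
  proof -
    have "chain_index E \<tau> (dl e) $ i = (\<Sum>e'\<in>E. if e' = e then \<tau> e $ i else 0)"
      unfolding ci_component dl_def by (rule sum.cong) auto
    then show ?thesis using f e by (simp add: sum.delta')
  qed
  then show ?thesis by (simp add: vec_eq_iff)
qed

lemma bd_add: "bd E src tgt (\<lambda>e. x e + y e) v = bd E src tgt x v + bd E src tgt y v"
  using addf_bd[of E src tgt v] unfolding addf_def by blast

lemma bd_neg: "bd E src tgt (\<lambda>e. - x e) v = - bd E src tgt x v"
  using addf_neg[OF addf_bd[of E src tgt v]] .

lemma bd_dl: "finite E \<Longrightarrow> e \<in> E \<Longrightarrow>
   bd E src tgt (dl e) v = (if tgt e = v then 1 else 0) - (if src e = v then 1 else 0)"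
proof -
  assume f: "finite E" and e: "e \<in> E"
  have fs: "finite {e\<in>E. P e}" for P using f by simp
  have "(\<Sum>e'\<in>{e\<in>E. P e}. dl e e') = (if P e then 1 else 0)" for P
    unfolding dl_def using fs[of P] e by (simp add: sum.delta')
  then show ?thesis unfolding bd_def by simp
qed

lemma chains_add: "x \<in> chains E \<Longrightarrow> y \<in> chains E \<Longrightarrow> (\<lambda>e. x e + y e) \<in> chains E"
  unfolding chains_def by simp

lemma chains_neg: "x \<in> chains E \<Longrightarrow> (\<lambda>e. - x e) \<in> chains E"
  unfolding chains_def by simp

lemma chains_dl: "e \<in> E \<Longrightarrow> dl e \<in> chains E"
  unfolding chains_def dl_def by auto

lemma walk_chain:
  assumes f: "finite E" and w: "(periodic_adj V E src tgt \<tau>)\<^sup>*\<^sup>* p q"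
  shows "\<exists>c\<in>chains E. (\<forall>v. bd E src tgt c v = (if v = fst q then 1 else 0) - (if v = fst p then 1 else 0))
      \<and> chain_index E \<tau> c = snd q - snd p"
  using w
proof (induction rule: rtranclp_induct)
  case base
  have "(\<lambda>e. 0) \<in> chains E" unfolding chains_def by simp
  moreover have "\<forall>v. bd E src tgt (\<lambda>e. 0) v = 0" unfolding bd_def by simp
  ultimately show ?case using ci_zero by fastforce
next
  case (step y z)
  obtain c where c: "c \<in> chains E"
    "\<forall>v. bd E src tgt c v = (if v = fst y then 1 else 0) - (if v = fst p then 1 else 0)"
    "chain_index E \<tau> c = snd y - snd p" using step.IH by blast
  obtain e where e: "e \<in> E" "(src e = fst y \<and> tgt e = fst z \<and> snd z = snd y + \<tau> e) \<or>
            (src e = fst z \<and> tgt e = fst y \<and> snd y = snd z + \<tau> e)"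
    using step.hyps(2) unfolding periodic_adj_def by blast
  from e(2) show ?case
  proof
    assume h: "src e = fst y \<and> tgt e = fst z \<and> snd z = snd y + \<tau> e"
    let ?c = "\<lambda>x. c x + dl e x"
    have "?c \<in> chains E" using chains_add[OF c(1) chains_dl[OF e(1)]] .
    moreover have "\<forall>v. bd E src tgt ?c v = (if v = fst z then 1 else 0) - (if v = fst p then 1 else 0)"
      using bd_add[of E src tgt c "dl e"] bd_dl[OF f e(1), of src tgt] c(2) h by auto
    moreover have "chain_index E \<tau> ?c = snd z - snd p"
      using ci_add[of E \<tau> c "dl e"] ci_dl[OF f e(1), of \<tau>] c(3) h by simp
    ultimately show ?case by blast
  next
    assume h: "src e = fst z \<and> tgt e = fst y \<and> snd y = snd z + \<tau> e"
    let ?c = "\<lambda>x. c x + - dl e x"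
    have "?c \<in> chains E" using chains_add[OF c(1) chains_neg[OF chains_dl[OF e(1)]]] .
    moreover have "\<forall>v. bd E src tgt ?c v = (if v = fst z then 1 else 0) - (if v = fst p then 1 else 0)"
      using bd_add[of E src tgt c "\<lambda>x. - dl e x"] bd_neg[of E src tgt "dl e"] bd_dl[OF f e(1), of src tgt] c(2) h by auto
    moreover have "chain_index E \<tau> ?c = snd z - snd p"
      using ci_add[of E \<tau> c "\<lambda>x. - dl e x"] ci_neg[of E \<tau> "dl e"] ci_dl[OF f e(1), of \<tau>] c(3) h by simp
    ultimately show ?case by blast
  qed
qed

lemma bd_sum_zero:
  assumes fV: "finite V" and fE: "finite E" and sv: "\<forall>e\<in>E. src e \<in> V \<and> tgt e \<in> V"
  shows "(\<Sum>v\<in>V. bd E src tgt x v) = 0"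
proof -
  have "(\<Sum>v\<in>V. (\<Sum>e\<in>{e\<in>E. tgt e = v}. x e)) = (\<Sum>e\<in>E. x e)"
    by (rule sum.group[OF fE fV]) (use sv in auto)
  moreover have "(\<Sum>v\<in>V. (\<Sum>e\<in>{e\<in>E. src e = v}. x e)) = (\<Sum>e\<in>E. x e)"
    by (rule sum.group[OF fE fV]) (use sv in auto)
  ultimately show ?thesis unfolding bd_def by (simp add: sum_subtractf)
qed

lemma cycle_space_kernel:
  assumes fV: "finite V" and fE: "finite E" and sv: "\<forall>e\<in>E. src e \<in> V \<and> tgt e \<in> V" and v0: "v0 \<in> V"
  shows "cycle_space V E src tgt = {x\<in>chains E. \<forall>v\<in>V - {v0}. bd E src tgt x v = 0}"
proof -
  have "(\<forall>v\<in>V. bd E src tgt x v = 0) \<longleftrightarrow> (\<forall>v\<in>V - {v0}. bd E src tgt x v = 0)" for x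
  proof
    assume h: "\<forall>v\<in>V - {v0}. bd E src tgt x v = 0"
    have "(\<Sum>v\<in>V. bd E src tgt x v) = bd E src tgt x v0 + (\<Sum>v\<in>V - {v0}. bd E src tgt x v)"
      using fV v0 by (simp add: sum.remove)
    then have "bd E src tgt x v0 = 0" using h bd_sum_zero[OF fV fE sv, of x] by simp
    then show "\<forall>v\<in>V. bd E src tgt x v = 0" using h by blast
  qed auto
  then show ?thesis unfolding cycle_space_def bd_def by auto
qed



lemma mod_sum_tgt:
  assumes fE: "finite E" and v: "v \<in> V"
  shows "(\<Sum>e'\<in>{e'\<in>mod_edges V E. mod_tgt tgt e' = v}. y e') = (\<Sum>e\<in>{e\<in>E. tgt e = v}. y (Inl e)) + y (Inr v)"
proof -
  have eq: "{e'\<in>mod_edges V E. mod_tgt tgt e' = v} = Inl ` {e\<in>E. tgt e = v} \<union> {Inr v}"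
  proof (rule set_eqI)
    fix x show "x \<in> {e'\<in>mod_edges V E. mod_tgt tgt e' = v} \<longleftrightarrow> x \<in> Inl ` {e\<in>E. tgt e = v} \<union> {Inr v}"
      using v by (cases x) (auto simp: mod_edges_def mod_tgt_def)
  qed
  have "(\<Sum>e'\<in>Inl ` {e\<in>E. tgt e = v} \<union> {Inr v}. y e') = (\<Sum>e'\<in>Inl ` {e\<in>E. tgt e = v}. y e') + y (Inr v)"
    using fE by (subst sum.union_disjoint) auto
  also have "(\<Sum>e'\<in>Inl ` {e\<in>E. tgt e = v}. y e') = (\<Sum>e\<in>{e\<in>E. tgt e = v}. y (Inl e))"
    by (subst sum.reindex) (auto simp: inj_on_def)
  finally show ?thesis using eq by simp
qed

lemma mod_sum_src:
  assumes fE: "finite E" and v: "v \<in> V"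
  shows "(\<Sum>e'\<in>{e'\<in>mod_edges V E. mod_src src e' = v}. y e') = (\<Sum>e\<in>{e\<in>E. src e = v}. y (Inl e)) + y (Inr v)"
proof -
  have eq: "{e'\<in>mod_edges V E. mod_src src e' = v} = Inl ` {e\<in>E. src e = v} \<union> {Inr v}"
  proof (rule set_eqI)
    fix x show "x \<in> {e'\<in>mod_edges V E. mod_src src e' = v} \<longleftrightarrow> x \<in> Inl ` {e\<in>E. src e = v} \<union> {Inr v}"
      using v by (cases x) (auto simp: mod_edges_def mod_src_def)
  qed
  have "(\<Sum>e'\<in>Inl ` {e\<in>E. src e = v} \<union> {Inr v}. y e') = (\<Sum>e'\<in>Inl ` {e\<in>E. src e = v}. y e') + y (Inr v)"
    using fE by (subst sum.union_disjoint) auto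
  also have "(\<Sum>e'\<in>Inl ` {e\<in>E. src e = v}. y e') = (\<Sum>e\<in>{e\<in>E. src e = v}. y (Inl e))"
    by (subst sum.reindex) (auto simp: inj_on_def)
  finally show ?thesis using eq by simp
qed

lemma mod_cycle_iff:
  assumes fE: "finite E"
  shows "y \<in> cycle_space V (mod_edges V E) (mod_src src) (mod_tgt tgt) \<longleftrightarrow>
     (\<lambda>e. y (Inl e)) \<in> cycle_space V E src tgt \<and> (\<forall>v. v \<notin> V \<longrightarrow> y (Inr v) = 0)"
proof -
  have ch: "y \<in> chains (mod_edges V E) \<longleftrightarrow> (\<lambda>e. y (Inl e)) \<in> chains E \<and> (\<forall>v. v \<notin> V \<longrightarrow> y (Inr v) = 0)"
  proof
    assume h: "y \<in> chains (mod_edges V E)"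
    show "(\<lambda>e. y (Inl e)) \<in> chains E \<and> (\<forall>v. v \<notin> V \<longrightarrow> y (Inr v) = 0)"
      using h unfolding chains_def mod_edges_def by auto
  next
    assume h: "(\<lambda>e. y (Inl e)) \<in> chains E \<and> (\<forall>v. v \<notin> V \<longrightarrow> y (Inr v) = 0)"
    show "y \<in> chains (mod_edges V E)"
      unfolding chains_def mod_edges_def
    proof (intro CollectI allI impI)
      fix e' assume "e' \<notin> Inl ` E \<union> Inr ` V"
      then show "y e' = 0" using h unfolding chains_def by (cases e') auto
    qed
  qed
  have bal: "(\<forall>v\<in>V. (\<Sum>e'\<in>{e'\<in>mod_edges V E. mod_tgt tgt e' = v}. y e') = (\<Sum>e'\<in>{e'\<in>mod_edges V E. mod_src src e' = v}. y e'))
     \<longleftrightarrow> (\<forall>v\<in>V. (\<Sum>e\<in>{e\<in>E. tgt e = v}. y (Inl e)) = (\<Sum>e\<in>{e\<in>E. src e = v}. y (Inl e)))"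
  proof -
    have "((\<Sum>e'\<in>{e'\<in>mod_edges V E. mod_tgt tgt e' = v}. y e') = (\<Sum>e'\<in>{e'\<in>mod_edges V E. mod_src src e' = v}. y e'))
       \<longleftrightarrow> ((\<Sum>e\<in>{e\<in>E. tgt e = v}. y (Inl e)) = (\<Sum>e\<in>{e\<in>E. src e = v}. y (Inl e)))"
      if v: "v \<in> V" for v
      using mod_sum_tgt[OF fE v, where tgt=tgt and y=y] mod_sum_src[OF fE v, where src=src and y=y] by linarith
    then show ?thesis by blast
  qed
  show ?thesis unfolding cycle_space_def using ch bal by blast
qed

definition modB :: "('i \<Rightarrow> 'e \<Rightarrow> int) \<Rightarrow> ('i + 'v) \<Rightarrow> ('e + 'v) \<Rightarrow> int" where
  "modB c k = (case k of Inl j \<Rightarrow> lift_chain (c j) | Inr x \<Rightarrow> loop_chain x)"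

lemma lc_modB:
  assumes fI: "finite I" and fV: "finite V"
  shows "lc a (modB c) (I <+> V) = (\<lambda>e'. case e' of Inl e \<Rightarrow> lc (\<lambda>i. a (Inl i)) c I e | Inr v \<Rightarrow> if v \<in> V then a (Inr v) else 0)"
proof
  fix e'
  have "lc a (modB c) (I <+> V) e' = (\<Sum>k\<in>Inl ` I. a k * modB c k e') + (\<Sum>k\<in>Inr ` V. a k * modB c k e')"
    unfolding lc_def Plus_def using fI fV by (subst sum.union_disjoint) auto
  also have "(\<Sum>k\<in>Inl ` I. a k * modB c k e') = (\<Sum>i\<in>I. a (Inl i) * modB c (Inl i) e')"
    by (subst sum.reindex) (auto simp: inj_on_def)
  also have "(\<Sum>k\<in>Inr ` V. a k * modB c k e') = (\<Sum>v\<in>V. a (Inr v) * modB c (Inr v) e')"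
    by (subst sum.reindex) (auto simp: inj_on_def)
  finally have eq: "lc a (modB c) (I <+> V) e' = (\<Sum>i\<in>I. a (Inl i) * modB c (Inl i) e') + (\<Sum>v\<in>V. a (Inr v) * modB c (Inr v) e')" .
  show "lc a (modB c) (I <+> V) e' = (case e' of Inl e \<Rightarrow> lc (\<lambda>i. a (Inl i)) c I e | Inr v \<Rightarrow> if v \<in> V then a (Inr v) else 0)"
  proof (cases e')
    case (Inl e)
    then show ?thesis using eq unfolding modB_def lift_chain_def loop_chain_def lc_def by simp
  next
    case (Inr v)
    have "(\<Sum>w\<in>V. a (Inr w) * modB c (Inr w) (Inr v)) = (\<Sum>w\<in>V. if w = v then a (Inr w) else 0)"
      unfolding modB_def loop_chain_def by (rule sum.cong) auto
    also have "\<dots> = (if v \<in> V then a (Inr v) else 0)" using fV by (simp add: sum.delta')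
    finally show ?thesis using eq Inr unfolding modB_def lift_chain_def by simp
  qed
qed

lemma mod_basis:
  assumes fV: "finite V" and fE: "finite E" and B: "basisZ (cycle_space V E src tgt) c I"
  shows "basisZ (cycle_space V (mod_edges V E) (mod_src src) (mod_tgt tgt)) (modB c) (I <+> V)"
proof -
  have fI: "finite I" using B basisZ_def by blast
  have CS: "cycle_space V E src tgt = spanZ c I" using B basisZ_def by blast
  have "cycle_space V (mod_edges V E) (mod_src src) (mod_tgt tgt) = spanZ (modB c) (I <+> V)"
  proof
    show "cycle_space V (mod_edges V E) (mod_src src) (mod_tgt tgt) \<subseteq> spanZ (modB c) (I <+> V)"
    proof
      fix y assume y: "y \<in> cycle_space V (mod_edges V E) (mod_src src) (mod_tgt tgt)"
      then have z: "(\<lambda>e. y (Inl e)) \<in> spanZ c I" and yv: "\<forall>v. v \<notin> V \<longrightarrow> y (Inr v) = 0"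
        using mod_cycle_iff[OF fE, of y V src tgt] CS by auto
      obtain a0 where a0: "(\<lambda>e. y (Inl e)) = lc a0 c I" using z unfolding spanZ_def by blast
      let ?a = "case_sum a0 (\<lambda>v. y (Inr v))"
      have "lc ?a (modB c) (I <+> V) = y"
      proof
        fix e' show "lc ?a (modB c) (I <+> V) e' = y e'"
        proof (cases e')
          case (Inl e)
          have "lc ?a (modB c) (I <+> V) e' = lc a0 c I e" using lc_modB[OF fI fV, of ?a c] Inl by simp
          also have "\<dots> = y (Inl e)" using fun_cong[OF a0, of e] by simp
          finally show ?thesis using Inl by simp
        next
          case (Inr v)
          then show ?thesis using lc_modB[OF fI fV, of ?a c] yv by auto
        qed
      qed
      then show "y \<in> spanZ (modB c) (I <+> V)" using in_spanZ by metis
    qed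
  next
    show "spanZ (modB c) (I <+> V) \<subseteq> cycle_space V (mod_edges V E) (mod_src src) (mod_tgt tgt)"
    proof
      fix y assume "y \<in> spanZ (modB c) (I <+> V)"
      then obtain a where a: "y = lc a (modB c) (I <+> V)" unfolding spanZ_def by blast
      have "(\<lambda>e. y (Inl e)) = lc (\<lambda>i. a (Inl i)) c I" using a lc_modB[OF fI fV, of a c] by simp
      then have "(\<lambda>e. y (Inl e)) \<in> cycle_space V E src tgt" using CS in_spanZ by metis
      moreover have "\<forall>v. v \<notin> V \<longrightarrow> y (Inr v) = 0" using a lc_modB[OF fI fV, of a c] by simp
      ultimately show "y \<in> cycle_space V (mod_edges V E) (mod_src src) (mod_tgt tgt)"
        using mod_cycle_iff[OF fE] by blast
    qed
  qed
  moreover have "indepZ (modB c) (I <+> V)"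
    unfolding indepZ_def
  proof (intro allI impI ballI)
    fix a k assume z: "lc a (modB c) (I <+> V) = (\<lambda>e. 0)" and k: "k \<in> I <+> V"
    have zl: "lc (\<lambda>i. a (Inl i)) c I = (\<lambda>e. 0)"
    proof
      fix e show "lc (\<lambda>i. a (Inl i)) c I e = 0" using fun_cong[OF z, of "Inl e"] lc_modB[OF fI fV, of a c] by simp
    qed
    show "a k = 0"
    proof (cases k)
      case (Inl i)
      then have "i \<in> I" using k by auto
      then show ?thesis using zl B Inl unfolding basisZ_def indepZ_def by blast
    next
      case (Inr v)
      then have "v \<in> V" using k by auto
      then show ?thesis using fun_cong[OF z, of "Inr v"] lc_modB[OF fI fV, of a c] Inr by simp
    qed
  qed
  moreover have "finite (I <+> V)" using finite_Plus[OF fI fV] .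
  ultimately show ?thesis unfolding basisZ_def by blast
qed



theorem lemma3p6:
  fixes V :: "'v set" and E :: "'e set" and src tgt :: "'e \<Rightarrow> 'v"
    and \<tau> :: "'e \<Rightarrow> int^'d"
  assumes "finite V" and "V \<noteq> {}" and "finite E"
    and "\<forall>e\<in>E. src e \<in> V \<and> tgt e \<in> V"
    and "periodic_graph_connected V E src tgt \<tau>"
  shows "int CARD('d) \<le> betti V E \<and>
    (\<exists>c :: ('d + nat) \<Rightarrow> 'e \<Rightarrow> int.
       Z_basis (cycle_space V E src tgt) c (UNIV <+> {..<nat (betti V E - int CARD('d))})
     \<and> (\<forall>i. chain_index E \<tau> (c (Inl i)) = axis i 1)
     \<and> Z_basis (zero_index_cycles V E src tgt \<tau>) (\<lambda>j. c (Inr j)) {..<nat (betti V E - int CARD('d))}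
     \<and> Z_basis (cycle_space V (mod_edges V E) (mod_src src) (mod_tgt tgt))
         (\<lambda>k. case k of Inl j \<Rightarrow> lift_chain (c j) | Inr x \<Rightarrow> loop_chain x)
         ((UNIV <+> {..<nat (betti V E - int CARD('d))}) <+> V))"
proof -
  have fV: "finite V" and fE: "finite E" and sv: "\<forall>e\<in>E. src e \<in> V \<and> tgt e \<in> V"
    using assms by auto
  obtain v0 where v0: "v0 \<in> V" using assms(2) by blast
  have conn: "(periodic_adj V E src tgt \<tau>)\<^sup>*\<^sup>* x y" if "fst x \<in> V" "fst y \<in> V" for x y
    using assms(5) that unfolding periodic_graph_connected_def by blast
  define J1 where "J1 = V - {v0}"
  have fJ1: "finite J1" using fV unfolding J1_def by blast
  define L1 where "L1 = (\<lambda>v x. if v \<in> J1 then bd E src tgt x v else 0)"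
  have add1: "\<forall>v. addf (L1 v)"
  proof
    fix v show "addf (L1 v)" unfolding L1_def by (rule addf_if[OF addf_bd])
  qed
  have supp1: "\<forall>x\<in>chains E. \<forall>j. j \<notin> J1 \<longrightarrow> L1 j x = 0" unfolding L1_def by simp
  have surj1: "\<forall>w\<in>J1. \<exists>x\<in>chains E. \<forall>j'. L1 j' x = (if j' = w then 1 else 0)"
  proof
    fix w assume w: "w \<in> J1"
    have wV: "w \<in> V" using w unfolding J1_def by blast
    have "(periodic_adj V E src tgt \<tau>)\<^sup>*\<^sup>* (v0, 0) (w, 0)" using conn[of "(v0, 0)" "(w, 0)"] v0 wV by simp
    from walk_chain[OF fE this] obtain c where c0: "c \<in> chains E"
      "\<forall>v. bd E src tgt c v = (if v = fst (w, 0::int^'d) then 1 else 0) - (if v = fst (v0, 0::int^'d) then 1 else 0)" by blast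
    have c: "c \<in> chains E" "\<forall>v. bd E src tgt c v = (if v = w then 1 else 0) - (if v = v0 then 1 else 0)"
      using c0 by simp_all
    have "\<forall>j'. L1 j' c = (if j' = w then 1 else 0)"
      proof
      fix j' show "L1 j' c = (if j' = w then 1 else 0)"
        using c(2) w unfolding L1_def J1_def by (cases "j' = w"; cases "j' = v0") auto
    qed
    then show "\<exists>x\<in>chains E. \<forall>j'. L1 j' x = (if j' = w then 1 else 0)" using c(1) by blast
  qed
  obtain b1 \<phi>1 where C1: "basisZ (chains E) b1 E" "inj_on \<phi>1 J1" "\<phi>1 ` J1 \<subseteq> E"
     "\<forall>j\<in>J1. \<forall>j'. L1 j' (b1 (\<phi>1 j)) = (if j' = j then 1 else 0)"
     "\<forall>i\<in>E - \<phi>1 ` J1. \<forall>j'. L1 j' (b1 i) = 0"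
    using CL[OF fJ1 chains_basis[OF fE] add1 supp1 surj1] by blast
  have CSk: "cycle_space V E src tgt = {x\<in>chains E. \<forall>j\<in>J1. L1 j x = 0}"
    using cycle_space_kernel[OF fV fE sv v0] unfolding L1_def J1_def by simp
  define R where "R = E - \<phi>1 ` J1"
  have B1: "basisZ (cycle_space V E src tgt) b1 R"
    unfolding CSk R_def
    by (rule basisZ_kernel[OF C1(1) fJ1 _ C1(2) C1(3)]) (use add1 C1(4) C1(5) in auto)
  have fD: "finite (UNIV::'d set)" by simp
  define L2 where "L2 = (\<lambda>i x. chain_index E \<tau> x $ i)"
  have add2: "\<forall>i. addf (L2 i)"
  proof
    fix i show "addf (L2 i)" unfolding L2_def by (rule addf_ci)
  qed
  have supp2: "\<forall>x\<in>cycle_space V E src tgt. \<forall>j. j \<notin> (UNIV::'d set) \<longrightarrow> L2 j x = 0" by simp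
  have surj2: "\<forall>i\<in>(UNIV::'d set). \<exists>x\<in>cycle_space V E src tgt. \<forall>j'. L2 j' x = (if j' = i then 1 else 0)"
  proof
    fix i :: 'd
    have "(periodic_adj V E src tgt \<tau>)\<^sup>*\<^sup>* (v0, 0) (v0, axis i 1)" using conn[of "(v0, 0)" "(v0, axis i 1)"] v0 by simp
    from walk_chain[OF fE this] obtain c where c0: "c \<in> chains E"
      "\<forall>v. bd E src tgt c v = (if v = fst (v0, axis i (1::int)) then 1 else 0) - (if v = fst (v0, 0::int^'d) then 1 else 0)"
      "chain_index E \<tau> c = snd (v0, axis i (1::int)) - snd (v0, 0::int^'d)" by blast
    have c: "c \<in> chains E" "\<forall>v. bd E src tgt c v = 0" "chain_index E \<tau> c = axis i 1"
      using c0 by simp_all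
    have "c \<in> cycle_space V E src tgt" using cycle_space_kernel[OF fV fE sv v0] c by auto
    moreover have "\<forall>j'. L2 j' c = (if j' = i then 1 else 0)" unfolding L2_def c(3) axis_def by simp
    ultimately show "\<exists>x\<in>cycle_space V E src tgt. \<forall>j'. L2 j' x = (if j' = i then 1 else 0)" by blast
  qed
  obtain b2 \<phi>2 where C2: "basisZ (cycle_space V E src tgt) b2 R" "inj_on \<phi>2 (UNIV::'d set)" "\<phi>2 ` UNIV \<subseteq> R"
     "\<forall>j\<in>UNIV. \<forall>j'. L2 j' (b2 (\<phi>2 j)) = (if j' = j then 1 else 0)"
     "\<forall>i\<in>R - \<phi>2 ` UNIV. \<forall>j'. L2 j' (b2 i) = 0"
    using CL[OF fD B1 add2 supp2 surj2] by blast
  have ZIk: "zero_index_cycles V E src tgt \<tau> = {x\<in>cycle_space V E src tgt. \<forall>j\<in>UNIV. L2 j x = 0}"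
    unfolding zero_index_cycles_def L2_def by (simp add: vec_eq_iff)
  define R' where "R' = R - \<phi>2 ` UNIV"
  have B2': "basisZ (zero_index_cycles V E src tgt \<tau>) b2 R'"
    unfolding ZIk R'_def
    by (rule basisZ_kernel[OF C2(1) fD _ C2(2) C2(3)]) (use add2 C2(4) C2(5) in auto)
  have idx: "chain_index E \<tau> (b2 (\<phi>2 i)) = axis i 1" for i
    using C2(4) unfolding L2_def axis_def by (simp add: vec_eq_iff)
  have cJ1: "card (\<phi>1 ` J1) = card V - 1" using card_image[OF C1(2)] v0 fV unfolding J1_def by simp
  have cR: "card R = card E - card (\<phi>1 ` J1)" unfolding R_def using card_Diff_subset[OF _ C1(3)] fE finite_subset[OF C1(3)] by simp
  have le1: "card (\<phi>1 ` J1) \<le> card E" using card_mono[OF fE C1(3)] .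
  have "card V > 0" using v0 fV card_gt_0_iff by blast
  then have cV: "card V \<ge> 1" by simp
  have betR: "int (card R) = betti V E" unfolding betti_def using cR cJ1 le1 cV by simp
  have fR: "finite R" unfolding R_def using fE by blast
  have cd: "card (\<phi>2 ` (UNIV::'d set)) = CARD('d)" using card_image[OF C2(2)] .
  have le2: "CARD('d) \<le> card R" using card_mono[OF fR C2(3)] cd by simp
  have cR': "card R' = card R - CARD('d)" unfolding R'_def using card_Diff_subset[OF _ C2(3)] cd by simp
  have part1: "int CARD('d) \<le> betti V E" using le2 betR by simp
  define k where "k = nat (betti V E - int CARD('d))"
  have kR': "k = card R'" unfolding k_def using cR' betR le2 by simp
  have fR': "finite R'" unfolding R'_def using fR by blast
  obtain g where g: "bij_betw g {0..<card R'} R'" using ex_bij_betw_nat_finite[OF fR'] by blast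
  have g': "bij_betw g {..<k} R'" using g kR' by (simp add: lessThan_atLeast0)
  define h where "h = case_sum \<phi>2 g"
  have hbij: "bij_betw h (UNIV <+> {..<k}) R"
    unfolding bij_betw_def
  proof
    show "inj_on h (UNIV <+> {..<k})"
    proof (rule inj_onI)
      fix x y assume x: "x \<in> UNIV <+> {..<k}" and y: "y \<in> UNIV <+> {..<k}" and hxy: "h x = h y"
      show "x = y"
      proof (cases x; cases y)
        fix a b assume "x = Inl a" "y = Inl b"
        then show "x = y" using hxy C2(2) unfolding h_def inj_on_def by auto
      next
        fix a b assume xa: "x = Inl a" and yb: "y = Inr b"
        then have "b \<in> {..<k}" using y by auto
        then have "g b \<in> R'" using g' bij_betw_apply by metis
        moreover have "h x = \<phi>2 a" "h y = g b" by (simp_all add: h_def xa yb)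
        ultimately show "x = y" using hxy unfolding R'_def by (metis DiffD2 rangeI)
      next
        fix a b assume xa: "x = Inr a" and yb: "y = Inl b"
        then have "a \<in> {..<k}" using x by auto
        then have "g a \<in> R'" using g' bij_betw_apply by metis
        moreover have "h x = g a" "h y = \<phi>2 b" by (simp_all add: h_def xa yb)
        ultimately show "x = y" using hxy unfolding R'_def by (metis DiffD2 rangeI)
      next
        fix a b assume xa: "x = Inr a" and yb: "y = Inr b"
        then have "a \<in> {..<k}" "b \<in> {..<k}" using x y by auto
        then show "x = y" using hxy xa yb g' unfolding h_def bij_betw_def inj_on_def by auto
      qed
    qed
    have "h ` (UNIV <+> {..<k}) = \<phi>2 ` UNIV \<union> g ` {..<k}" unfolding h_def Plus_def by (auto simp: image_Un image_image)
    also have "\<dots> = \<phi>2 ` UNIV \<union> R'" using g' bij_betw_imp_surj_on by metis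
    also have "\<dots> = R" unfolding R'_def using C2(3) by blast
    finally show "h ` (UNIV <+> {..<k}) = R" .
  qed
  define c where "c = (\<lambda>x. b2 (h x))"
  have Bc: "basisZ (cycle_space V E src tgt) c (UNIV <+> {..<k})"
    unfolding c_def using basisZ_reindex[OF hbij C2(1)] .
  have cInr: "(\<lambda>j. c (Inr j)) = (\<lambda>j. b2 (g j))" unfolding c_def h_def by simp
  have Bz: "basisZ (zero_index_cycles V E src tgt \<tau>) (\<lambda>j. c (Inr j)) {..<k}"
    unfolding cInr using basisZ_reindex[OF g' B2'] .
  have ix: "\<forall>i. chain_index E \<tau> (c (Inl i)) = axis i 1" unfolding c_def h_def using idx by simp
  have Bm: "basisZ (cycle_space V (mod_edges V E) (mod_src src) (mod_tgt tgt)) (modB c) ((UNIV <+> {..<k}) <+> V)"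
    using mod_basis[OF fV fE Bc] .
  have mB: "modB c = (\<lambda>k. case k of Inl j \<Rightarrow> lift_chain (c j) | Inr x \<Rightarrow> loop_chain x)"
    unfolding modB_def by (rule ext) simp
  have Z1: "Z_basis (cycle_space V E src tgt) c (UNIV <+> {..<k})" using basisZ_Z_basis[OF Bc] .
  have Z2: "Z_basis (zero_index_cycles V E src tgt \<tau>) (\<lambda>j. c (Inr j)) {..<k}" using basisZ_Z_basis[OF Bz] .
  have Z3: "Z_basis (cycle_space V (mod_edges V E) (mod_src src) (mod_tgt tgt))
         (\<lambda>k. case k of Inl j \<Rightarrow> lift_chain (c j) | Inr x \<Rightarrow> loop_chain x) ((UNIV <+> {..<k}) <+> V)"
    using basisZ_Z_basis[OF Bm] unfolding mB .
  have "\<exists>c :: ('d + nat) \<Rightarrow> 'e \<Rightarrow> int. Z_basis (cycle_space V E src tgt) c (UNIV <+> {..<k})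
     \<and> (\<forall>i. chain_index E \<tau> (c (Inl i)) = axis i 1)
     \<and> Z_basis (zero_index_cycles V E src tgt \<tau>) (\<lambda>j. c (Inr j)) {..<k}
     \<and> Z_basis (cycle_space V (mod_edges V E) (mod_src src) (mod_tgt tgt))
         (\<lambda>k. case k of Inl j \<Rightarrow> lift_chain (c j) | Inr x \<Rightarrow> loop_chain x) ((UNIV <+> {..<k}) <+> V)"
    using Z1 Z2 Z3 ix by blast
  then show ?thesis using part1 unfolding k_def by blast
qed

end
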